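(* Let $N$ be a positive integer. Let $\pi: A\to B$ be a surjective map between nonempty finite sets and let $\mathfrak s$ be a section of $\pi$. Let $\mu$ and $\rho$ be two probability measures on $\{0,1,\dots,N\}^A$. Assume that $\mu$ is a $\pi$-lift and that the following two conditions hold: (A) Let $Z$ be a $\rho$-distributed random variable. For every $b\in B$, let $W_b:=(Z_c : c\in A,\ \pi(c)\neq b)$. For every $b\in B$, every $a\in\pi^{-1}(\{b\})$ and every event $H\in \sigma(W_b)$ of positive probability, the conditional distribution of $Z_{\mathfrak s(b)}$ given $H$ is stochastically dominated by the conditional distribution of $Z_a$ given $H$. (B) Let $Y$ be a $\mu$-distributed random variable, let $X_b:=\max_{a\in \pi^{-1}(\{b\})}Y_a$ for $b\in B$, and let $Y'_a:=X_{\pi(a)}\,\mathbf{1}_{\mathfrak s(\pi(a))=a}$ for $a\in A$. Then the distribution of $Y'$ is stochastically dominated by $\rho$. Then $\mu$ is stochastically dominated by $\rho$.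
   Context: $\{0,1,\dots,N\}^A$ carries the product order. A section of $\pi$ is a map $s:B\to A$ with $\pi\circ s=\mathrm{id}_B$. A probability measure $\mu$ on $\{0,\dots,N\}^A$ is a $\pi$-lift if for $\mu$-almost every $x$, for every $b\in B$, at most one $a\in\pi^{-1}(\{b\})$ satisfies $x_a\neq0$. Stochastic domination of $\mu$ by $\nu$ means there exist $X\sim\mu$, $Y\sim\nu$ on a common probability space with $X\le Y$ almost surely. *)

theory Defs
  imports "HOL-Probability.Probability"
begin

text \<open>Stochastic domination: existence of a monotone coupling (X ~ mu, Y ~ nu, X \<le> Y a.s.).
  All state spaces here are finite, so probability measures are pmfs.\<close>
definition stoch_dom :: "'x::order pmf \<Rightarrow> 'x pmf \<Rightarrow> bool" where
  "stoch_dom \<mu> \<nu> \<longleftrightarrow> (\<exists>w :: ('x \<times> 'x) pmf.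
      map_pmf fst w = \<mu> \<and> map_pmf snd w = \<nu> \<and> (\<forall>(x, y) \<in> set_pmf w. x \<le> y))"

definition is_section :: "('a \<Rightarrow> 'b) \<Rightarrow> ('b \<Rightarrow> 'a) \<Rightarrow> bool" where
  "is_section \<pi> s \<longleftrightarrow> (\<forall>b. \<pi> (s b) = b)"

definition pi_lift :: "('a \<Rightarrow> 'b) \<Rightarrow> ('a \<Rightarrow> nat) pmf \<Rightarrow> bool" where
  "pi_lift \<pi> \<mu> \<longleftrightarrow> (AE x in measure_pmf \<mu>. \<forall>b. \<forall>a1 a2. \<pi> a1 = b \<and> \<pi> a2 = b \<and>
      x a1 \<noteq> 0 \<and> x a2 \<noteq> 0 \<longrightarrow> a1 = a2)"

text \<open>W_b(z) = (z_c : pi c \<noteq> b), represented as the restriction of z to the complement of the fibre.\<close>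
definition W :: "('a \<Rightarrow> 'b) \<Rightarrow> 'b \<Rightarrow> ('a \<Rightarrow> nat) \<Rightarrow> ('a \<Rightarrow> nat)" where
  "W \<pi> b z = restrict z {c. \<pi> c \<noteq> b}"

text \<open>Events in sigma(W_b): preimages under W_b (discrete state space).\<close>
definition sigma_W :: "('a \<Rightarrow> 'b) \<Rightarrow> 'b \<Rightarrow> ('a \<Rightarrow> nat) set set" where
  "sigma_W \<pi> b = {W \<pi> b -` S | S. True}"

definition fibre_max :: "('a::finite \<Rightarrow> 'b) \<Rightarrow> ('a \<Rightarrow> nat) \<Rightarrow> 'b \<Rightarrow> nat" where
  "fibre_max \<pi> y b = Max {y a | a. \<pi> a = b}"

definition collapse :: "('a::finite \<Rightarrow> 'b) \<Rightarrow> ('b \<Rightarrow> 'a) \<Rightarrow> ('a \<Rightarrow> nat) \<Rightarrow> ('a \<Rightarrow> nat)" where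
  "collapse \<pi> s y = (\<lambda>a. if s (\<pi> a) = a then fibre_max \<pi> y (\<pi> a) else 0)"

end

theory Submission
  imports Defs
begin


definition hallc :: "'x set \<Rightarrow> 'y set \<Rightarrow> ('x \<Rightarrow> 'y \<Rightarrow> bool) \<Rightarrow> ('x \<Rightarrow> real) \<Rightarrow> ('y \<Rightarrow> real) \<Rightarrow> bool" where
  "hallc X Y R p q \<longleftrightarrow> (\<forall>x\<in>X. p x \<ge> 0) \<and> (\<forall>y\<in>Y. q y \<ge> 0) \<and>
     (\<forall>A\<subseteq>X. sum p A \<le> sum q {y\<in>Y. \<exists>x\<in>A. R x y})"

definition flowc :: "'x set \<Rightarrow> 'y set \<Rightarrow> ('x \<Rightarrow> 'y \<Rightarrow> bool) \<Rightarrow> ('x \<Rightarrow> real) \<Rightarrow> ('y \<Rightarrow> real) \<Rightarrow> ('x \<Rightarrow> 'y \<Rightarrow> real) \<Rightarrow> bool" where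
  "flowc X Y R p q f \<longleftrightarrow> (\<forall>x y. f x y \<ge> 0) \<and> (\<forall>x y. f x y \<noteq> 0 \<longrightarrow> x\<in>X \<and> y\<in>Y \<and> R x y) \<and>
     (\<forall>x\<in>X. (\<Sum>y\<in>Y. f x y) = p x) \<and> (\<forall>y\<in>Y. (\<Sum>x\<in>X. f x y) \<le> q y)"

lemma flow_rowsum:
  assumes "flowc X Y R p q f" "finite Y" "Y \<subseteq> Y'" "finite Y'" "x \<in> X"
  shows "(\<Sum>y\<in>Y'. f x y) = p x"
proof -
  have "(\<Sum>y\<in>Y'. f x y) = (\<Sum>y\<in>Y. f x y)"
    using assms unfolding flowc_def by (intro sum.mono_neutral_right) auto
  thus ?thesis using assms unfolding flowc_def by auto
qed

lemma flow_colsum: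
  assumes "flowc X Y R p q f" "finite X" "X \<subseteq> X'" "finite X'"
  shows "(\<Sum>x\<in>X'. f x y) = (\<Sum>x\<in>X. f x y)"
  using assms unfolding flowc_def by (intro sum.mono_neutral_right) auto

lemma flow_zero:
  assumes "flowc X Y R p q f" "x \<notin> X \<or> y \<notin> Y"
  shows "f x y = 0"
  using assms unfolding flowc_def by auto

lemma sum_upd_gen:
  fixes g :: "'a \<Rightarrow> real"
  assumes "finite A"
  shows "sum (g(a := v)) A = sum g A + (if a \<in> A then v - g a else 0)"
proof (cases "a \<in> A")
  case True
  have "sum (g(a := v)) A = v + sum (g(a := v)) (A - {a})" using assms True by (simp add: sum.remove)
  also have "sum (g(a := v)) (A - {a}) = sum g (A - {a})" by (intro sum.cong) auto
  also have "sum g A = g a + sum g (A - {a})" using assms True by (simp add: sum.remove)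
  ultimately show ?thesis using True by simp
next
  case False
  have "sum (g(a := v)) A = sum g A" by (rule sum.cong) (use False in auto)
  thus ?thesis using False by simp
qed

lemma sum_pt:
  assumes "finite Y"
  shows "(\<Sum>y\<in>Y. (if x = x0 \<and> y = y0 then e else 0)) = (if x = x0 \<and> y0 \<in> Y then e else (0::real))"
  using assms by (cases "x = x0") auto

lemma sum_pt2:
  assumes "finite X"
  shows "(\<Sum>x\<in>X. (if x = x0 \<and> y = y0 then e else 0)) = (if y = y0 \<and> x0 \<in> X then e else (0::real))"
  using assms by (cases "y = y0") auto

lemma hall_flow:
  assumes "finite X" "finite Y" "hallc X Y R p q"
  shows "\<exists>f. flowc X Y R p q f"
  using assms
proof (induction "card X + card Y" arbitrary: X Y p q rule: less_induct)
  case less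
  define NB where "NB = (\<lambda>A. {y\<in>Y. \<exists>x\<in>A. R x y})"
  have finNB: "finite (NB A)" for A using less.prems(2) unfolding NB_def by auto
  have remx: "\<exists>f. flowc X Y R p' q' f"
    if h: "hallc X Y R p' q'" and x0: "x0 \<in> X" "p' x0 = 0" for p' q' x0
  proof -
    have "card (X - {x0}) < card X" by (rule card_Diff1_less[OF less.prems(1) x0(1)])
    moreover have "hallc (X - {x0}) Y R p' q'" using h unfolding hallc_def by auto
    ultimately obtain f where f: "flowc (X - {x0}) Y R p' q' f"
      using less.hyps[of "X - {x0}" Y] less.prems by fastforce
    have "flowc X Y R p' q' f"
      unfolding flowc_def
    proof (intro conjI; intro allI impI ballI)
      fix x y show "f x y \<ge> 0" using f unfolding flowc_def by auto
    next
      fix x y assume "f x y \<noteq> 0" thus "x \<in> X \<and> y \<in> Y \<and> R x y" using f unfolding flowc_def by auto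
    next
      fix x assume "x \<in> X"
      show "(\<Sum>y\<in>Y. f x y) = p' x"
      proof (cases "x = x0")
        case True thus ?thesis using flow_zero[OF f] x0 by simp
      next
        case False thus ?thesis using f \<open>x \<in> X\<close> unfolding flowc_def by auto
      qed
    next
      fix y assume "y \<in> Y"
      have "(\<Sum>x\<in>X. f x y) = (\<Sum>x\<in>X - {x0}. f x y)"
        using flow_colsum[OF f, of X] less.prems(1) by auto
      thus "(\<Sum>x\<in>X. f x y) \<le> q' y" using f \<open>y \<in> Y\<close> unfolding flowc_def by auto
    qed
    thus ?thesis by blast
  qed
  have remy: "\<exists>f. flowc X Y R p' q' f"
    if h: "hallc X Y R p' q'" and y0: "y0 \<in> Y" "q' y0 = 0" for p' q' y0
  proof -
    have "card (Y - {y0}) < card Y" by (rule card_Diff1_less[OF less.prems(2) y0(1)])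
    moreover have "hallc X (Y - {y0}) R p' q'"
      unfolding hallc_def
    proof (intro conjI; intro allI impI ballI)
      fix A assume A: "A \<subseteq> X"
      have "sum q' {y\<in>Y. \<exists>x\<in>A. R x y} = sum q' {y\<in>Y - {y0}. \<exists>x\<in>A. R x y}"
        using y0 less.prems(2) by (intro sum.mono_neutral_right) auto
      thus "sum p' A \<le> sum q' {y \<in> Y - {y0}. \<exists>x\<in>A. R x y}" using h A unfolding hallc_def by auto
    qed (use h in \<open>auto simp: hallc_def\<close>)
    ultimately obtain f where f: "flowc X (Y - {y0}) R p' q' f"
      using less.hyps[of X "Y - {y0}"] less.prems by fastforce
    have "flowc X Y R p' q' f"
      unfolding flowc_def
    proof (intro conjI; intro allI impI ballI)
      fix x y show "f x y \<ge> 0" using f unfolding flowc_def by auto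
    next
      fix x y assume "f x y \<noteq> 0" thus "x \<in> X \<and> y \<in> Y \<and> R x y" using f unfolding flowc_def by auto
    next
      fix x assume "x \<in> X"
      show "(\<Sum>y\<in>Y. f x y) = p' x"
        using flow_rowsum[OF f _ _ _ \<open>x \<in> X\<close>] less.prems(2) by auto
    next
      fix y assume "y \<in> Y"
      show "(\<Sum>x\<in>X. f x y) \<le> q' y"
      proof (cases "y = y0")
        case True thus ?thesis using flow_zero[OF f] y0 by simp
      next
        case False thus ?thesis using f \<open>y \<in> Y\<close> unfolding flowc_def by auto
      qed
    qed
    thus ?thesis by blast
  qed
  have split: "\<exists>f. flowc X Y R p' q' f"
    if h: "hallc X Y R p' q'" and A: "A \<subseteq> X" "A \<noteq> {}" "A \<noteq> X" "sum p' A = sum q' (NB A)"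
    for p' q' A
  proof -
    have finA: "finite A" using A less.prems(1) finite_subset by auto
    have "card A < card X" using A less.prems(1) by (meson psubsetI psubset_card_mono)
    moreover have "card (NB A) \<le> card Y" using less.prems(2) unfolding NB_def by (intro card_mono) auto
    moreover have "hallc A (NB A) R p' q'"
      unfolding hallc_def
    proof (intro conjI; intro allI impI ballI)
      fix B assume B: "B \<subseteq> A"
      have "{y \<in> NB A. \<exists>x\<in>B. R x y} = NB B" using B unfolding NB_def by auto
      thus "sum p' B \<le> sum q' {y \<in> NB A. \<exists>x\<in>B. R x y}" using h B A unfolding hallc_def NB_def by auto
    qed (use h A in \<open>auto simp: hallc_def NB_def\<close>)
    ultimately obtain f1 where f1: "flowc A (NB A) R p' q' f1"
      using less.hyps[of A "NB A"] finA finNB[of A] by fastforce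
    have "card (X - A) < card X" using A less.prems(1) by (intro psubset_card_mono) auto
    moreover have "card (Y - NB A) \<le> card Y" using less.prems(2) by (intro card_mono) auto
    moreover have "hallc (X - A) (Y - NB A) R p' q'"
      unfolding hallc_def
    proof (intro conjI; intro allI impI ballI)
      fix B assume B: "B \<subseteq> X - A"
      have finB: "finite B" using B less.prems(1) finite_subset by blast
      have e1: "sum p' (A \<union> B) = sum p' A + sum p' B"
        using B finA finB by (intro sum.union_disjoint) auto
      have e2: "NB (A \<union> B) = NB A \<union> {y \<in> Y - NB A. \<exists>x\<in>B. R x y}" unfolding NB_def by auto
      have e3: "sum q' (NB (A \<union> B)) = sum q' (NB A) + sum q' {y \<in> Y - NB A. \<exists>x\<in>B. R x y}"
        unfolding e2 using finNB[of A] less.prems(2) by (intro sum.union_disjoint) auto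
      have "A \<union> B \<subseteq> X" using A(1) B by auto
      hence "sum p' (A \<union> B) \<le> sum q' (NB (A \<union> B))" using h unfolding hallc_def NB_def by blast
      thus "sum p' B \<le> sum q' {y \<in> Y - NB A. \<exists>x\<in>B. R x y}" using e1 e3 A(4) by linarith
    qed (use h in \<open>auto simp: hallc_def\<close>)
    ultimately obtain f2 where f2: "flowc (X - A) (Y - NB A) R p' q' f2"
      using less.hyps[of "X - A" "Y - NB A"] less.prems by fastforce
    define f where "f = (\<lambda>x y. if x \<in> A then f1 x y else f2 x y)"
    have "flowc X Y R p' q' f"
      unfolding flowc_def
    proof (intro conjI; intro allI impI ballI)
      fix x y show "f x y \<ge> 0" using f1 f2 unfolding flowc_def f_def by auto
    next
      fix x y assume nz: "f x y \<noteq> 0"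
      show "x \<in> X \<and> y \<in> Y \<and> R x y"
      proof (cases "x \<in> A")
        case True
        hence "f1 x y \<noteq> 0" using nz unfolding f_def by simp
        hence "x \<in> A \<and> y \<in> NB A \<and> R x y" using f1 unfolding flowc_def by blast
        thus ?thesis using A(1) unfolding NB_def by blast
      next
        case False
        hence "f2 x y \<noteq> 0" using nz unfolding f_def by simp
        thus ?thesis using f2 unfolding flowc_def by blast
      qed
    next
      fix x assume x: "x \<in> X"
      show "(\<Sum>y\<in>Y. f x y) = p' x"
      proof (cases "x \<in> A")
        case True
        thus ?thesis using flow_rowsum[OF f1 finNB _ less.prems(2) True] unfolding f_def NB_def by auto
      next
        case False
        thus ?thesis using flow_rowsum[OF f2 _ _ less.prems(2), of x] x less.prems(2) unfolding f_def by auto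
      qed
    next
      fix y assume y: "y \<in> Y"
      have s: "(\<Sum>x\<in>X. f x y) = (\<Sum>x\<in>X - A. f2 x y) + (\<Sum>x\<in>A. f1 x y)"
        using sum.subset_diff[OF A(1) less.prems(1), of "\<lambda>x. f x y"] unfolding f_def by simp
      show "(\<Sum>x\<in>X. f x y) \<le> q' y"
      proof (cases "y \<in> NB A")
        case True
        have "(\<Sum>x\<in>X - A. f2 x y) = 0" using flow_zero[OF f2] True by simp
        thus ?thesis using s f1 True unfolding flowc_def by auto
      next
        case False
        have "(\<Sum>x\<in>A. f1 x y) = 0" using flow_zero[OF f1] False by simp
        thus ?thesis using s f2 False y unfolding flowc_def by auto
      qed
    qed
    thus ?thesis by blast
  qed
  show ?case
  proof (cases "X = {}")
    case True
    have "flowc X Y R p q (\<lambda>_ _. 0)" using True less.prems(3) unfolding flowc_def hallc_def by simp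
    thus ?thesis by blast
  next
    case False
    then obtain x0 where x0: "x0 \<in> X" by blast
    have h: "hallc X Y R p q" by (rule less.prems(3))
    show ?thesis
    proof (cases "NB {x0} = {}")
      case True
      have "{x0} \<subseteq> X" using x0 by simp
      hence "sum p {x0} \<le> sum q (NB {x0})" using h unfolding hallc_def NB_def by blast
      hence "p x0 \<le> 0" using True by simp
      moreover have "p x0 \<ge> 0" using h x0 unfolding hallc_def by blast
      ultimately have "p x0 = 0" by simp
      thus ?thesis using remx[OF h x0] by blast
    next
      case False
      then obtain y0 where "y0 \<in> NB {x0}" by blast
      hence y0: "y0 \<in> Y" "R x0 y0" unfolding NB_def by auto
      define Sl where "Sl = (\<lambda>A. sum q (NB A) - sum p A) ` {A. A \<subseteq> X - {x0} \<and> y0 \<in> NB A}"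
      have "finite {A. A \<subseteq> X - {x0} \<and> y0 \<in> NB A}"
        by (rule finite_subset[of _ "Pow (X - {x0})"]) (use less.prems(1) in auto)
      hence finSl: "finite Sl" unfolding Sl_def by auto
      define eps where "eps = Min (insert (p x0) (insert (q y0) Sl))"
      have eps_all: "\<forall>z \<in> insert (p x0) (insert (q y0) Sl). eps \<le> z"
        unfolding eps_def proof
        fix z assume "z \<in> insert (p x0) (insert (q y0) Sl)"
        thus "Min (insert (p x0) (insert (q y0) Sl)) \<le> z" using finSl by (intro Min_le) auto
      qed
      have eps_le: "eps \<le> p x0" "eps \<le> q y0" "\<forall>s\<in>Sl. eps \<le> s" using eps_all by auto
      have eps_in: "eps \<in> insert (p x0) (insert (q y0) Sl)" unfolding eps_def using finSl by (intro Min_in) auto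
      have slnn: "\<forall>s\<in>Sl. s \<ge> 0"
      proof
        fix s assume "s \<in> Sl"
        then obtain A where "A \<subseteq> X - {x0}" "s = sum q (NB A) - sum p A" unfolding Sl_def by auto
        thus "s \<ge> 0" using h unfolding hallc_def NB_def by auto
      qed
      have eps_nn: "eps \<ge> 0" using eps_in slnn h x0 y0 unfolding hallc_def by auto
      define p' where "p' = p(x0 := p x0 - eps)"
      define q' where "q' = q(y0 := q y0 - eps)"
      have sp: "sum p' A = sum p A - (if x0 \<in> A then eps else 0)" if "A \<subseteq> X" for A
      proof -
        have "finite A" using that less.prems(1) by (rule finite_subset)
        thus ?thesis using sum_upd_gen[of A p x0 "p x0 - eps"] unfolding p'_def by simp
      qed
      have sq: "sum q' (NB A) = sum q (NB A) - (if y0 \<in> NB A then eps else 0)" for A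
        using sum_upd_gen[of "NB A" q y0 "q y0 - eps"] finNB[of A] unfolding q'_def by simp
      have h': "hallc X Y R p' q'"
        unfolding hallc_def
      proof (intro conjI; intro allI impI ballI)
        fix x assume "x \<in> X" thus "p' x \<ge> 0" using h eps_le unfolding hallc_def p'_def by auto
      next
        fix y assume "y \<in> Y" thus "q' y \<ge> 0" using h eps_le unfolding hallc_def q'_def by auto
      next
        fix A assume A: "A \<subseteq> X"
        have hA: "sum p A \<le> sum q (NB A)" using h A unfolding hallc_def NB_def by auto
        show "sum p' A \<le> sum q' {y \<in> Y. \<exists>x\<in>A. R x y}"
        proof (cases "x0 \<in> A")
          case True
          thus ?thesis using sp[OF A] sq[of A] hA eps_nn unfolding NB_def by auto
        next
          case False
          show ?thesis
          proof (cases "y0 \<in> NB A")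
            case True
            hence "sum q (NB A) - sum p A \<in> Sl" unfolding Sl_def using A False by auto
            hence "eps \<le> sum q (NB A) - sum p A" using eps_le by auto
            thus ?thesis using sp[OF A] sq[of A] True False unfolding NB_def by auto
          next
            case F2: False
            thus ?thesis using sp[OF A] sq[of A] hA False unfolding NB_def by auto
          qed
        qed
      qed
      obtain f' where f': "flowc X Y R p' q' f'"
      proof -
        have "\<exists>f. flowc X Y R p' q' f"
        proof -
          consider "eps = p x0" | "eps = q y0" | "eps \<in> Sl" using eps_in by auto
          thus ?thesis
          proof cases
            case 1
            hence "p' x0 = 0" unfolding p'_def by simp
            thus ?thesis using remx[OF h' x0] by blast
          next
            case 2
            hence "q' y0 = 0" unfolding q'_def by simp
            thus ?thesis using remy[OF h' y0(1)] by blast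
          next
            case 3
            then obtain A where A: "A \<subseteq> X - {x0}" "y0 \<in> NB A" "eps = sum q (NB A) - sum p A"
              unfolding Sl_def by auto
            have AX: "A \<subseteq> X" using A by auto
            have "sum p' A = sum q' (NB A)" using sp[OF AX] sq[of A] A by auto
            moreover have "A \<noteq> {}" using A(2) unfolding NB_def by auto
            moreover have "A \<noteq> X" using A x0 by auto
            ultimately show ?thesis using split[OF h' AX] by blast
          qed
        qed
        thus ?thesis using that by blast
      qed
      define f where "f = (\<lambda>x y. f' x y + (if x = x0 \<and> y = y0 then eps else 0))"
      have "flowc X Y R p q f"
        unfolding flowc_def
      proof (intro conjI; intro allI impI ballI)
        fix x y show "f x y \<ge> 0" using f' eps_nn unfolding flowc_def f_def by auto
      next
        fix x y assume nz: "f x y \<noteq> 0"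
        show "x \<in> X \<and> y \<in> Y \<and> R x y"
        proof (cases "x = x0 \<and> y = y0")
          case True thus ?thesis using x0 y0 by auto
        next
          case False
          hence "f' x y \<noteq> 0" using nz unfolding f_def by auto
          thus ?thesis using f' unfolding flowc_def by blast
        qed
      next
        fix x assume x: "x \<in> X"
        have "(\<Sum>y\<in>Y. f x y) = (\<Sum>y\<in>Y. f' x y) + (\<Sum>y\<in>Y. (if x = x0 \<and> y = y0 then eps else 0))"
          unfolding f_def by (rule sum.distrib)
        also have "(\<Sum>y\<in>Y. (if x = x0 \<and> y = y0 then eps else 0)) = (if x = x0 \<and> y0 \<in> Y then eps else 0)"
          by (rule sum_pt[OF less.prems(2)])
        finally have "(\<Sum>y\<in>Y. f x y) = (\<Sum>y\<in>Y. f' x y) + (if x = x0 \<and> y0 \<in> Y then eps else 0)" .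
        thus "(\<Sum>y\<in>Y. f x y) = p x" using f' x y0 unfolding flowc_def p'_def by auto
      next
        fix y assume y: "y \<in> Y"
        have "(\<Sum>x\<in>X. f x y) = (\<Sum>x\<in>X. f' x y) + (\<Sum>x\<in>X. (if x = x0 \<and> y = y0 then eps else 0))"
          unfolding f_def by (rule sum.distrib)
        also have "(\<Sum>x\<in>X. (if x = x0 \<and> y = y0 then eps else 0)) = (if y = y0 \<and> x0 \<in> X then eps else 0)"
          by (rule sum_pt2[OF less.prems(1)])
        finally have "(\<Sum>x\<in>X. f x y) = (\<Sum>x\<in>X. f' x y) + (if y = y0 \<and> x0 \<in> X then eps else 0)" .
        thus "(\<Sum>x\<in>X. f x y) \<le> q y" using f' y x0 unfolding flowc_def q'_def
          by (cases "y = y0") auto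
      qed
      thus ?thesis by blast
    qed
  qed
qed



lemma measure_fin_supp:
  fixes w :: "'z pmf"
  assumes "set_pmf w \<subseteq> S" "finite S"
  shows "measure w B = (\<Sum>z\<in>B \<inter> S. pmf w z)"
proof -
  have "measure w B = measure w (B \<inter> set_pmf w)" by (simp add: measure_Int_set_pmf)
  also have "\<dots> = measure w ((B \<inter> S) \<inter> set_pmf w)" using assms(1) by (intro arg_cong[where f="measure w"]) auto
  also have "\<dots> = measure w (B \<inter> S)" by (simp add: measure_Int_set_pmf)
  also have "\<dots> = (\<Sum>z\<in>B \<inter> S. pmf w z)" using assms(2) by (intro measure_measure_pmf_finite) auto
  finally show ?thesis .
qed

lemma strassen_pmf:
  fixes \<mu> \<rho> :: "'x::order pmf"
  assumes finm: "finite (set_pmf \<mu>)" and finr: "finite (set_pmf \<rho>)"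
    and up: "\<And>U. (\<forall>x y. x \<in> U \<longrightarrow> x \<le> y \<longrightarrow> y \<in> U) \<Longrightarrow> measure \<mu> U \<le> measure \<rho> U"
  shows "stoch_dom \<mu> \<rho>"
proof -
  define X where "X = set_pmf \<mu>"
  define Y where "Y = set_pmf \<rho>"
  have fX: "finite X" and fY: "finite Y" using finm finr X_def Y_def by auto
  have "hallc X Y (\<le>) (pmf \<mu>) (pmf \<rho>)"
    unfolding hallc_def
  proof (intro conjI; intro allI impI ballI)
    fix A assume A: "A \<subseteq> X"
    define U where "U = {y. \<exists>x\<in>A. x \<le> y}"
    have fA: "finite A" using A fX by (rule finite_subset)
    have "sum (pmf \<mu>) A = measure \<mu> A" using fA by (simp add: measure_measure_pmf_finite)
    also have "\<dots> \<le> measure \<mu> U" unfolding U_def by (intro measure_pmf.finite_measure_mono) auto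
    also have "\<dots> \<le> measure \<rho> U" unfolding U_def by (intro up) (auto intro: order_trans)
    also have "\<dots> = (\<Sum>z\<in>U \<inter> Y. pmf \<rho> z)" using fY Y_def by (intro measure_fin_supp) auto
    also have "U \<inter> Y = {y \<in> Y. \<exists>x\<in>A. x \<le> y}" unfolding U_def by auto
    finally show "sum (pmf \<mu>) A \<le> sum (pmf \<rho>) {y \<in> Y. \<exists>x\<in>A. x \<le> y}" .
  qed auto
  then obtain f where f: "flowc X Y (\<le>) (pmf \<mu>) (pmf \<rho>) f" using hall_flow fX fY by blast
  have row: "\<And>x. x \<in> X \<Longrightarrow> (\<Sum>y\<in>Y. f x y) = pmf \<mu> x" using f unfolding flowc_def by auto
  have colle: "\<And>y. y \<in> Y \<Longrightarrow> (\<Sum>x\<in>X. f x y) \<le> pmf \<rho> y" using f unfolding flowc_def by auto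
  have nn: "\<And>x y. f x y \<ge> 0" using f unfolding flowc_def by auto
  have supp: "\<And>x y. f x y \<noteq> 0 \<Longrightarrow> x \<in> X \<and> y \<in> Y \<and> x \<le> y" using f unfolding flowc_def by auto
  have tot: "(\<Sum>x\<in>X. \<Sum>y\<in>Y. f x y) = 1"
    using row sum_pmf_eq_1[OF fX] X_def by simp
  have col: "(\<Sum>x\<in>X. f x y) = pmf \<rho> y" if y: "y \<in> Y" for y
  proof (rule ccontr)
    assume "(\<Sum>x\<in>X. f x y) \<noteq> pmf \<rho> y"
    hence lt: "(\<Sum>x\<in>X. f x y) < pmf \<rho> y" using colle[OF y] by simp
    have "(\<Sum>y\<in>Y. \<Sum>x\<in>X. f x y) < (\<Sum>y\<in>Y. pmf \<rho> y)"
      using colle lt y fY by (intro sum_strict_mono_ex1) auto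
    moreover have "(\<Sum>y\<in>Y. \<Sum>x\<in>X. f x y) = 1" using tot sum.swap[of "\<lambda>x y. f x y" Y X] by simp
    moreover have "(\<Sum>y\<in>Y. pmf \<rho> y) = 1" using sum_pmf_eq_1[OF fY] Y_def by simp
    ultimately show False by simp
  qed
  define g where "g = (\<lambda>(x, y). f x y)"
  have gnn: "\<And>z. 0 \<le> g z" unfolding g_def using nn by auto
  have gsupp: "\<And>z. z \<notin> X \<times> Y \<Longrightarrow> g z = 0" unfolding g_def using supp by fastforce
  have gsum: "(\<Sum>z\<in>X \<times> Y. g z) = 1" using tot unfolding g_def by (simp add: sum.cartesian_product)
  have int1: "(\<integral>\<^sup>+z. ennreal (g z) \<partial>count_space UNIV) = 1"
  proof -
    have "(\<integral>\<^sup>+z. ennreal (g z) \<partial>count_space UNIV) = (\<Sum>z\<in>X \<times> Y. ennreal (g z))"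
      using fX fY gsupp by (intro nn_integral_count_space') auto
    also have "\<dots> = ennreal (\<Sum>z\<in>X \<times> Y. g z)" using gnn by simp
    finally show ?thesis using gsum by simp
  qed
  define w where "w = embed_pmf g"
  have pw: "\<And>z. pmf w z = g z" unfolding w_def using gnn int1 by (intro pmf_embed_pmf) auto
  have sw: "set_pmf w \<subseteq> X \<times> Y"
  proof
    fix z assume "z \<in> set_pmf w"
    hence "g z \<noteq> 0" by (simp add: set_pmf_iff pw)
    thus "z \<in> X \<times> Y" using gsupp by blast
  qed
  have fXY: "finite (X \<times> Y)" using fX fY by simp
  have m1: "map_pmf fst w = \<mu>"
  proof (rule pmf_eqI)
    fix x
    have "pmf (map_pmf fst w) x = (\<Sum>z\<in>fst -` {x} \<inter> (X \<times> Y). pmf w z)"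
      unfolding pmf_map by (rule measure_fin_supp[OF sw fXY])
    also have "\<dots> = pmf \<mu> x"
    proof (cases "x \<in> X")
      case True
      have "fst -` {x} \<inter> (X \<times> Y) = {x} \<times> Y" using True by auto
      thus ?thesis using row[OF True] by (simp add: pw g_def sum.cartesian_product[symmetric])
    next
      case False
      have "fst -` {x} \<inter> (X \<times> Y) = {}" using False by auto
      thus ?thesis using False X_def by (simp add: set_pmf_iff)
    qed
    finally show "pmf (map_pmf fst w) x = pmf \<mu> x" .
  qed
  have m2: "map_pmf snd w = \<rho>"
  proof (rule pmf_eqI)
    fix y
    have "pmf (map_pmf snd w) y = (\<Sum>z\<in>snd -` {y} \<inter> (X \<times> Y). pmf w z)"
      unfolding pmf_map by (rule measure_fin_supp[OF sw fXY])
    also have "\<dots> = pmf \<rho> y"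
    proof (cases "y \<in> Y")
      case True
      have "snd -` {y} \<inter> (X \<times> Y) = X \<times> {y}" using True by auto
      thus ?thesis using col[OF True] by (simp add: pw g_def sum.cartesian_product[symmetric])
    next
      case False
      have "snd -` {y} \<inter> (X \<times> Y) = {}" using False by auto
      thus ?thesis using False Y_def by (simp add: set_pmf_iff)
    qed
    finally show "pmf (map_pmf snd w) y = pmf \<rho> y" .
  qed
  have "\<forall>(x, y)\<in>set_pmf w. x \<le> y" using supp by (auto simp: set_pmf_iff pw g_def)
  thus ?thesis unfolding stoch_dom_def using m1 m2 by blast
qed



definition colD :: "('a::finite \<Rightarrow> 'b) \<Rightarrow> ('b \<Rightarrow> 'a) \<Rightarrow> 'b set \<Rightarrow> ('a \<Rightarrow> nat) \<Rightarrow> ('a \<Rightarrow> nat)" where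
  "colD \<pi> s D y = (\<lambda>a. if \<pi> a \<in> D then (if s (\<pi> a) = a then fibre_max \<pi> y (\<pi> a) else 0) else y a)"

definition upset :: "'x::order set \<Rightarrow> bool" where
  "upset U \<longleftrightarrow> (\<forall>x y. x \<in> U \<longrightarrow> x \<le> y \<longrightarrow> y \<in> U)"

lemma stoch_dom_upset:
  assumes "stoch_dom p q" "upset U"
  shows "measure p U \<le> measure q U"
proof -
  obtain w where w: "map_pmf fst w = p" "map_pmf snd w = q" "\<forall>(x, y)\<in>set_pmf w. x \<le> y"
    using assms(1) unfolding stoch_dom_def by blast
  have "measure p U = measure w (fst -` U \<inter> set_pmf w)"
    using w(1) by (auto simp: measure_Int_set_pmf)
  also have "\<dots> \<le> measure w (snd -` U)"
  proof (rule measure_pmf.finite_measure_mono)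
    show "fst -` U \<inter> set_pmf w \<subseteq> snd -` U"
      using w(3) assms(2) unfolding upset_def by fastforce
  qed auto
  also have "\<dots> = measure q U" using w(2) by auto
  finally show ?thesis .
qed

lemma upclosed_max:
  fixes S :: "'i \<Rightarrow> nat set"
  assumes "finite I" "I \<noteq> {}" "\<forall>i\<in>I. \<forall>k k'. k \<in> S i \<longrightarrow> k \<le> k' \<longrightarrow> k' \<in> S i"
  shows "\<exists>i\<in>I. \<forall>j\<in>I. S j \<subseteq> S i"
  using assms
proof (induction I rule: finite_ne_induct)
  case (singleton x) thus ?case by auto
next
  case (insert x F)
  then obtain i where i: "i \<in> F" "\<forall>j\<in>F. S j \<subseteq> S i" by auto
  show ?case
  proof (cases "S x \<subseteq> S i")
    case True thus ?thesis using i by auto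
  next
    case False
    then obtain k where k: "k \<in> S x" "k \<notin> S i" by auto
    have "S i \<subseteq> S x"
    proof
      fix m assume m: "m \<in> S i"
      have "\<not> m \<le> k" using m k insert.prems i(1) by blast
      hence "k \<le> m" by simp
      thus "m \<in> S x" using k(1) insert.prems by blast
    qed
    thus ?thesis using i by auto
  qed
qed

lemma cond_measure:
  fixes \<rho> :: "'z pmf"
  assumes "measure \<rho> H > 0"
  shows "measure (cond_pmf \<rho> H) B = measure \<rho> (H \<inter> B) / measure \<rho> H"
proof -
  have ne: "set_pmf \<rho> \<inter> H \<noteq> {}" using assms measure_pmf_zero_iff[of \<rho> H] by auto
  have "emeasure (measure_pmf \<rho>) H \<noteq> 0" using assms by (simp add: measure_pmf.emeasure_eq_measure)
  thus ?thesis using cond_pmf.rep_eq[OF ne] by (simp add: measure_pmf.emeasure_eq_measure)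
qed

lemma sum_by_fun:
  fixes \<rho> :: "'z pmf"
  assumes "finite (set_pmf \<rho>)"
  shows "measure \<rho> A = (\<Sum>w \<in> g ` set_pmf \<rho>. measure \<rho> (A \<inter> g -` {w}))"
proof -
  have "measure \<rho> A = (\<Sum>z\<in>A \<inter> set_pmf \<rho>. pmf \<rho> z)"
    using assms by (intro measure_fin_supp) auto
  also have "\<dots> = (\<Sum>w \<in> g ` set_pmf \<rho>. \<Sum>z\<in>{z \<in> A \<inter> set_pmf \<rho>. g z = w}. pmf \<rho> z)"
    using assms by (intro sum.group[symmetric]) auto
  also have "\<dots> = (\<Sum>w \<in> g ` set_pmf \<rho>. measure \<rho> (A \<inter> g -` {w}))"
  proof (rule sum.cong)
    fix w
    have "measure \<rho> (A \<inter> g -` {w}) = (\<Sum>z\<in>(A \<inter> g -` {w}) \<inter> set_pmf \<rho>. pmf \<rho> z)"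
      using assms by (intro measure_fin_supp) auto
    also have "(A \<inter> g -` {w}) \<inter> set_pmf \<rho> = {z \<in> A \<inter> set_pmf \<rho>. g z = w}" by auto
    finally show "(\<Sum>z\<in>{z \<in> A \<inter> set_pmf \<rho>. g z = w}. pmf \<rho> z) = measure \<rho> (A \<inter> g -` {w})" by simp
  qed simp
  finally show ?thesis .
qed

lemma fibre_step:
  fixes \<pi> :: "'a::finite \<Rightarrow> 'b" and s :: "'b \<Rightarrow> 'a" and \<mu> \<rho> :: "('a \<Rightarrow> nat) pmf"
  assumes sec: "is_section \<pi> s"
    and lift: "\<forall>y\<in>set_pmf \<mu>. \<forall>a1 a2. \<pi> a1 = \<pi> a2 \<and> y a1 \<noteq> 0 \<and> y a2 \<noteq> 0 \<longrightarrow> a1 = a2"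
    and condA: "\<And>b a H. \<pi> a = b \<Longrightarrow> H \<in> sigma_W \<pi> b \<Longrightarrow> measure_pmf.prob \<rho> H > 0 \<Longrightarrow>
        stoch_dom (map_pmf (\<lambda>z. z (s b)) (cond_pmf \<rho> H)) (map_pmf (\<lambda>z. z a) (cond_pmf \<rho> H))"
    and finr: "finite (set_pmf \<rho>)"
    and bD: "b \<notin> D"
    and IH: "\<forall>U. upset U \<longrightarrow> measure \<mu> (colD \<pi> s (insert b D) -` U) \<le> measure \<rho> U"
    and U: "upset U"
  shows "measure \<mu> (colD \<pi> s D -` U) \<le> measure \<rho> U"
proof -
  define ins where "ins = (\<lambda>(w::'a \<Rightarrow> nat) a k. (\<lambda>c. if \<pi> c = b then (if c = a then k else 0) else w c))"
  define Wb where "Wb = W \<pi> b"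
  define S where "S = (\<lambda>w a. {k. ins w a k \<in> U})"
  have Wb_eq: "\<And>z c. \<pi> c \<noteq> b \<Longrightarrow> Wb z c = z c" unfolding Wb_def W_def by simp
  have sb: "\<pi> (s b) = b" using sec unfolding is_section_def by simp
  have ins_mono: "ins w a k \<le> ins w' a k'" if "k \<le> k'" "\<And>c. \<pi> c \<noteq> b \<Longrightarrow> w c \<le> w' c" for w w' a k k'
    unfolding ins_def le_fun_def using that by auto
  have S_up: "\<forall>a\<in>{a. \<pi> a = b}. \<forall>k k'. k \<in> S w a \<longrightarrow> k \<le> k' \<longrightarrow> k' \<in> S w a" for w
    using U ins_mono unfolding S_def upset_def by blast
  define astar where "astar = (\<lambda>w. SOME a. \<pi> a = b \<and> (\<forall>a'. \<pi> a' = b \<longrightarrow> S w a' \<subseteq> S w a))"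
  have astar: "\<pi> (astar w) = b \<and> (\<forall>a'. \<pi> a' = b \<longrightarrow> S w a' \<subseteq> S w (astar w))" for w
  proof -
    have "\<exists>a\<in>{a. \<pi> a = b}. \<forall>a'\<in>{a. \<pi> a = b}. S w a' \<subseteq> S w a"
      using upclosed_max[OF _ _ S_up[of w]] sb by auto
    hence "\<exists>a. \<pi> a = b \<and> (\<forall>a'. \<pi> a' = b \<longrightarrow> S w a' \<subseteq> S w a)" by auto
    thus ?thesis unfolding astar_def by (rule someI_ex)
  qed
  define U' where "U' = {z. \<exists>a. \<pi> a = b \<and> ins (Wb z) a (z (s b)) \<in> U}"
  have U'_up: "upset U'"
    unfolding upset_def
  proof (intro allI impI)
    fix z z' assume z: "z \<in> U'" and le: "z \<le> z'"
    then obtain a where a: "\<pi> a = b" "ins (Wb z) a (z (s b)) \<in> U" unfolding U'_def by auto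
    have "ins (Wb z) a (z (s b)) \<le> ins (Wb z') a (z' (s b))"
      using le by (intro ins_mono) (auto simp: Wb_eq le_fun_def)
    thus "z' \<in> U'" using a U unfolding U'_def upset_def by blast
  qed
  have incl: "colD \<pi> s (insert b D) y \<in> U'" if y: "y \<in> set_pmf \<mu>" "colD \<pi> s D y \<in> U" for y
  proof -
    define a0 where "a0 = (if \<exists>a. \<pi> a = b \<and> y a \<noteq> 0 then (SOME a. \<pi> a = b \<and> y a \<noteq> 0) else s b)"
    have a0: "\<pi> a0 = b"
    proof (cases "\<exists>a. \<pi> a = b \<and> y a \<noteq> 0")
      case True
      hence e: "a0 = (SOME a. \<pi> a = b \<and> y a \<noteq> 0)" unfolding a0_def by (rule if_P)
      have "\<pi> a0 = b \<and> y a0 \<noteq> 0" unfolding e by (rule someI_ex[OF True])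
      thus ?thesis by blast
    next
      case False
      hence "a0 = s b" unfolding a0_def by (rule if_not_P)
      thus ?thesis using sb by simp
    qed
    have zero: "y c = 0" if "\<pi> c = b" "c \<noteq> a0" for c
    proof (cases "\<exists>a. \<pi> a = b \<and> y a \<noteq> 0")
      case True
      hence e: "a0 = (SOME a. \<pi> a = b \<and> y a \<noteq> 0)" unfolding a0_def by (rule if_P)
      have "\<pi> a0 = b \<and> y a0 \<noteq> 0" unfolding e by (rule someI_ex[OF True])
      thus ?thesis using lift y(1) that by blast
    next
      case False thus ?thesis using that by auto
    qed
    have fm: "fibre_max \<pi> y b = y a0"
      unfolding fibre_max_def
    proof (rule Max_eqI)
      show "finite {y a |a. \<pi> a = b}" by simp
      show "y a0 \<in> {y a |a. \<pi> a = b}" using a0 by auto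
      fix k assume "k \<in> {y a |a. \<pi> a = b}"
      then obtain a where "k = y a" "\<pi> a = b" by auto
      thus "k \<le> y a0" using zero by (cases "a = a0") auto
    qed
    let ?z = "colD \<pi> s (insert b D) y"
    have "ins (Wb ?z) a0 (?z (s b)) = colD \<pi> s D y"
    proof
      fix c
      show "ins (Wb ?z) a0 (?z (s b)) c = colD \<pi> s D y c"
      proof (cases "\<pi> c = b")
        case True
        show ?thesis
        proof (cases "c = a0")
          case True
          thus ?thesis using a0 sb bD fm unfolding ins_def colD_def by simp
        next
          case False
          thus ?thesis using True zero bD unfolding ins_def colD_def by simp
        qed
      next
        case False
        thus ?thesis using Wb_eq[OF False] unfolding ins_def colD_def by simp
      qed
    qed
    thus ?thesis using y(2) a0 unfolding U'_def by auto
  qed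
  have "measure \<mu> (colD \<pi> s D -` U) = measure \<mu> (colD \<pi> s D -` U \<inter> set_pmf \<mu>)"
    by (simp add: measure_Int_set_pmf)
  also have "\<dots> \<le> measure \<mu> (colD \<pi> s (insert b D) -` U')"
    by (rule measure_pmf.finite_measure_mono) (use incl in auto)
  also have "\<dots> \<le> measure \<rho> U'" using IH U'_up by blast
  also have "\<dots> \<le> measure \<rho> U"
  proof -
    define V where "V = {z. z (astar (Wb z)) \<in> S (Wb z) (astar (Wb z))}"
    have U'_eq: "U' = {z. z (s b) \<in> S (Wb z) (astar (Wb z))}"
    proof (intro set_eqI iffI)
      fix z assume "z \<in> U'"
      then obtain a where "\<pi> a = b" "z (s b) \<in> S (Wb z) a" unfolding U'_def S_def by auto
      thus "z \<in> {z. z (s b) \<in> S (Wb z) (astar (Wb z))}" using astar by blast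
    next
      fix z assume "z \<in> {z. z (s b) \<in> S (Wb z) (astar (Wb z))}"
      thus "z \<in> U'" using astar[of "Wb z"] unfolding U'_def S_def by auto
    qed
    have VU: "V \<subseteq> U"
    proof
      fix z assume "z \<in> V"
      hence inU: "ins (Wb z) (astar (Wb z)) (z (astar (Wb z))) \<in> U" unfolding V_def S_def by simp
      have "ins (Wb z) (astar (Wb z)) (z (astar (Wb z))) \<le> z"
        unfolding le_fun_def ins_def using Wb_eq by auto
      thus "z \<in> U" using inU U unfolding upset_def by blast
    qed
    have cond: "measure \<rho> (H \<inter> {z. z (s b) \<in> T}) \<le> measure \<rho> (H \<inter> {z. z a \<in> T})"
      if a: "\<pi> a = b" and H: "H \<in> sigma_W \<pi> b" and T: "upset T" for a H and T :: "nat set"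
    proof (cases "measure \<rho> H = 0")
      case True
      have "measure \<rho> (H \<inter> {z. z (s b) \<in> T}) \<le> measure \<rho> H"
        by (rule measure_pmf.finite_measure_mono) auto
      thus ?thesis using True by (simp add: measure_nonneg order_trans)
    next
      case False
      hence pos: "measure \<rho> H > 0" by (simp add: zero_less_measure_iff)
      have "measure (map_pmf (\<lambda>z. z (s b)) (cond_pmf \<rho> H)) T \<le> measure (map_pmf (\<lambda>z. z a) (cond_pmf \<rho> H)) T"
        using condA[OF a H pos] T by (rule stoch_dom_upset)
      hence "measure \<rho> (H \<inter> {z. z (s b) \<in> T}) / measure \<rho> H \<le> measure \<rho> (H \<inter> {z. z a \<in> T}) / measure \<rho> H"
        using cond_measure[OF pos] by (simp add: vimage_def)
      thus ?thesis using pos by (simp add: divide_le_cancel)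
    qed
    have "measure \<rho> U' = (\<Sum>w \<in> Wb ` set_pmf \<rho>. measure \<rho> (U' \<inter> Wb -` {w}))"
      using finr by (rule sum_by_fun)
    also have "\<dots> \<le> (\<Sum>w \<in> Wb ` set_pmf \<rho>. measure \<rho> (V \<inter> Wb -` {w}))"
    proof (rule sum_mono)
      fix w
      have e1: "U' \<inter> Wb -` {w} = Wb -` {w} \<inter> {z. z (s b) \<in> S w (astar w)}" unfolding U'_eq by auto
      have e2: "V \<inter> Wb -` {w} = Wb -` {w} \<inter> {z. z (astar w) \<in> S w (astar w)}" unfolding V_def by auto
      have H: "Wb -` {w} \<in> sigma_W \<pi> b" unfolding sigma_W_def Wb_def by blast
      have T: "upset (S w (astar w))" using S_up[of w] astar[of w] unfolding upset_def by blast
      show "measure \<rho> (U' \<inter> Wb -` {w}) \<le> measure \<rho> (V \<inter> Wb -` {w})"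
        unfolding e1 e2 using cond[OF conjunct1[OF astar[of w]] H T] .
    qed
    also have "\<dots> = measure \<rho> V" using finr by (rule sum_by_fun[symmetric])
    also have "\<dots> \<le> measure \<rho> U" using VU by (rule measure_pmf.finite_measure_mono) auto
    finally show ?thesis .
  qed
  finally show ?thesis .
qed

theorem proposition2p13:
  fixes N :: nat and \<pi> :: "'a::finite \<Rightarrow> 'b::finite" and s :: "'b \<Rightarrow> 'a"
    and \<mu> \<rho> :: "('a \<Rightarrow> nat) pmf"
  assumes "N > 0"
    and "surj \<pi>"
    and "is_section \<pi> s"
    and "set_pmf \<mu> \<subseteq> {x. \<forall>a. x a \<le> N}"
    and "set_pmf \<rho> \<subseteq> {x. \<forall>a. x a \<le> N}"
    and "pi_lift \<pi> \<mu>"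
    and condA: "\<And>b a H. \<pi> a = b \<Longrightarrow> H \<in> sigma_W \<pi> b \<Longrightarrow> measure_pmf.prob \<rho> H > 0 \<Longrightarrow>
        stoch_dom (map_pmf (\<lambda>z. z (s b)) (cond_pmf \<rho> H)) (map_pmf (\<lambda>z. z a) (cond_pmf \<rho> H))"
    and condB: "stoch_dom (map_pmf (collapse \<pi> s) \<mu>) \<rho>"
  shows "stoch_dom \<mu> \<rho>"
proof -
  have finbox: "finite {x :: 'a \<Rightarrow> nat. \<forall>a. x a \<le> N}"
    by (rule finite_subset[OF _ finite_PiE[of UNIV "\<lambda>_. {..N}"]]) (auto simp: PiE_iff)
  have finm: "finite (set_pmf \<mu>)" using assms(4) finbox by (rule finite_subset)
  have finr: "finite (set_pmf \<rho>)" using assms(5) finbox by (rule finite_subset)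
  have lift: "\<forall>y\<in>set_pmf \<mu>. \<forall>a1 a2. \<pi> a1 = \<pi> a2 \<and> y a1 \<noteq> 0 \<and> y a2 \<noteq> 0 \<longrightarrow> a1 = a2"
    using assms(6) unfolding pi_lift_def AE_measure_pmf_iff by blast
  have colU: "colD \<pi> s UNIV = collapse \<pi> s"
    unfolding colD_def collapse_def by auto
  have col0: "colD \<pi> s {} y = y" for y unfolding colD_def by simp
  have main: "\<forall>U. upset U \<longrightarrow> measure \<mu> (colD \<pi> s (- E) -` U) \<le> measure \<rho> U" if "finite E" for E
    using that
  proof (induction E rule: finite_induct)
    case empty
    show ?case
    proof (intro allI impI)
      fix U :: "('a \<Rightarrow> nat) set" assume "upset U"
      hence "measure (map_pmf (collapse \<pi> s) \<mu>) U \<le> measure \<rho> U"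
        using condB by (intro stoch_dom_upset)
      thus "measure \<mu> (colD \<pi> s (- {}) -` U) \<le> measure \<rho> U" using colU by simp
    qed
  next
    case (insert b E)
    have e: "insert b (- insert b E) = - E" using insert.hyps by auto
    show ?case
    proof (intro allI impI)
      fix U :: "('a \<Rightarrow> nat) set" assume U: "upset U"
      show "measure \<mu> (colD \<pi> s (- insert b E) -` U) \<le> measure \<rho> U"
        by (rule fibre_step[OF assms(3) lift condA finr _ _ U]) (use insert.IH e in auto)
    qed
  qed
  have "\<forall>U. upset U \<longrightarrow> measure \<mu> (colD \<pi> s (- UNIV) -` U) \<le> measure \<rho> U"
    using main[of UNIV] by simp
  moreover have cid: "colD \<pi> s {} -` U = U" for U using col0 by auto
  ultimately have up: "upset U \<Longrightarrow> measure \<mu> U \<le> measure \<rho> U" for U by simp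
  show ?thesis
    using finm finr by (rule strassen_pmf) (use up in \<open>auto simp: upset_def\<close>)
qed

end
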